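(* Let $G=(V,E)$ be a simple, connected graph. Then there exists a partition $V = A \cup B \cup C$ into pairwise disjoint sets ($C$ possibly empty) such that: (1) every $v \in A$ satisfies $d_B(v) \geq d_A(v) + \max\{1, d_C(v)\}$; (2) every $v \in B$ satisfies $d_A(v) \geq d_B(v) + \max\{1, d_C(v)\}$; (3) no two vertices of $C$ are joined by an edge, i.e. $d_C(v) = 0$ for all $v \in C$; (4) every $v \in C$ satisfies $d_A(v) = d_B(v)$; (5) $\# E(A \cup B, C) + 2\# E(A,A) + 2\# E(B,B) \leq 2\# E(A,B)$.
   Context: For a vertex $v$ and a set $S \subseteq V$, $d_S(v)$ denotes the number of neighbors of $v$ lying in $S$. For disjoint $X, Y \subseteq V$, $\# E(X,Y)$ is the number of edges with one endpoint in $X$ and the other in $Y$; $\# E(X,X)$ is the number of edges with both endpoints in $X$. *)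

theory Defs
  imports Main
begin

definition simple_graph :: "'a set \<Rightarrow> ('a \<Rightarrow> 'a \<Rightarrow> bool) \<Rightarrow> bool" where
  "simple_graph V E \<longleftrightarrow> finite V
     \<and> (\<forall>x y. E x y \<longrightarrow> x \<in> V \<and> y \<in> V)
     \<and> (\<forall>x y. E x y \<longrightarrow> E y x)
     \<and> (\<forall>x. \<not> E x x)"

definition connected_graph :: "'a set \<Rightarrow> ('a \<Rightarrow> 'a \<Rightarrow> bool) \<Rightarrow> bool" where
  "connected_graph V E \<longleftrightarrow> V \<noteq> {} \<and> (\<forall>x\<in>V. \<forall>y\<in>V. E\<^sup>*\<^sup>* x y)"

definition deg_in :: "('a \<Rightarrow> 'a \<Rightarrow> bool) \<Rightarrow> 'a set \<Rightarrow> 'a \<Rightarrow> nat" where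
  "deg_in E S v = card {u \<in> S. E v u}"

text \<open>Number of edges (unordered pairs) with one endpoint in X and the other in Y.
For disjoint X, Y this is #E(X,Y); for X = Y it is #E(X,X).\<close>
definition num_edges :: "('a \<Rightarrow> 'a \<Rightarrow> bool) \<Rightarrow> 'a set \<Rightarrow> 'a set \<Rightarrow> nat" where
  "num_edges E X Y = card {{x, y} | x y. x \<in> X \<and> y \<in> Y \<and> E x y}"

end

theory Submission
  imports Defs "HOL-Library.FuncSet"
begin

definition sv :: "('a \<Rightarrow> 'a \<Rightarrow> bool) \<Rightarrow> 'a set \<Rightarrow> ('a \<Rightarrow> int) \<Rightarrow> 'a \<Rightarrow> int" where
  "sv E V x u = (\<Sum>w\<in>V. if E u w then x w else 0)"

definition Qf :: "('a \<Rightarrow> 'a \<Rightarrow> bool) \<Rightarrow> 'a set \<Rightarrow> ('a \<Rightarrow> int) \<Rightarrow> int" where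
  "Qf E V d = (\<Sum>u\<in>V. \<Sum>w\<in>V. if E u w then d u * d w else 0)"

lemma Qf_expand:
  assumes sym: "\<forall>a b. E a b \<longrightarrow> E b a"
  shows "Qf E V y = Qf E V x + 2 * (\<Sum>u\<in>V. (y u - x u) * sv E V x u) + Qf E V (\<lambda>u. y u - x u)"
proof -
  have pt: "(if E u w then y u * y w else 0) = (if E u w then x u * x w else 0)
     + (if E u w then (y u - x u) * x w else 0) + (if E u w then x u * (y w - x w) else 0)
     + (if E u w then (y u - x u) * (y w - x w) else 0)" for u w
    by (auto simp: algebra_simps)
  have sw: "(\<Sum>u\<in>V. \<Sum>w\<in>V. if E u w then x u * (y w - x w) else 0)
      = (\<Sum>u\<in>V. \<Sum>w\<in>V. if E u w then (y u - x u) * x w else 0)"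
  proof -
    have "(\<Sum>u\<in>V. \<Sum>w\<in>V. if E u w then x u * (y w - x w) else 0)
        = (\<Sum>w\<in>V. \<Sum>u\<in>V. if E u w then x u * (y w - x w) else 0)" by (rule sum.swap)
    also have "\<dots> = (\<Sum>w\<in>V. \<Sum>u\<in>V. if E w u then (y w - x w) * x u else 0)"
      using sym by (intro sum.cong refl) (auto simp: mult.commute)
    finally show ?thesis .
  qed
  have sv2: "(\<Sum>u\<in>V. (y u - x u) * sv E V x u) = (\<Sum>u\<in>V. \<Sum>w\<in>V. if E u w then (y u - x u) * x w else 0)"
    unfolding sv_def sum_distrib_left by (intro sum.cong refl) auto
  show ?thesis unfolding Qf_def pt sum.distrib sw sv2 by simp
qed

lemma Qf_local:
  assumes "finite V" "S \<subseteq> V" "\<forall>u\<in>V-S. d u = 0"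
  shows "Qf E V d = Qf E S d"
proof -
  have "Qf E S d = (\<Sum>u\<in>S. \<Sum>w\<in>V. if E u w then d u * d w else 0)"
    unfolding Qf_def
  proof (rule sum.cong[OF refl])
    fix u assume "u \<in> S"
    show "(\<Sum>w\<in>S. if E u w then d u * d w else 0) = (\<Sum>w\<in>V. if E u w then d u * d w else 0)"
      by (rule sum.mono_neutral_left) (use assms in \<open>auto\<close>)
  qed
  also have "\<dots> = Qf E V d" unfolding Qf_def
    by (rule sum.mono_neutral_left) (use assms in \<open>auto intro!: sum.neutral\<close>)
  finally show ?thesis by simp
qed

lemma change_local:
  assumes fin: "finite V" and sym: "\<forall>a b. E a b \<longrightarrow> E b a" and S: "S \<subseteq> V"
    and eq: "\<forall>u\<in>V-S. y u = x u"
  shows "Qf E V y = Qf E V x + 2 * (\<Sum>u\<in>S. (y u - x u) * sv E V x u) + Qf E S (\<lambda>u. y u - x u)"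
proof -
  have "(\<Sum>u\<in>S. (y u - x u) * sv E V x u) = (\<Sum>u\<in>V. (y u - x u) * sv E V x u)"
    by (intro sum.mono_neutral_left) (use assms in \<open>auto intro: finite_subset\<close>)
  moreover have "Qf E V (\<lambda>u. y u - x u) = Qf E S (\<lambda>u. y u - x u)"
    by (rule Qf_local) (use assms in auto)
  ultimately show ?thesis using Qf_expand[OF sym, of V y x] by simp
qed

lemma ne_disj:
  assumes "finite X" "finite Y" "X \<inter> Y = {}"
  shows "num_edges E X Y = (\<Sum>x\<in>X. deg_in E Y x)"
proof -
  let ?P = "SIGMA x:X. {y\<in>Y. E x y}"
  let ?f = "\<lambda>(x,y). {x,y}"
  have inj: "inj_on ?f ?P"
    using assms(3) by (auto simp: inj_on_def doubleton_eq_iff)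
  have im: "?f ` ?P = {{x, y} | x y. x \<in> X \<and> y \<in> Y \<and> E x y}" by auto
  have "num_edges E X Y = card ?P" unfolding num_edges_def im[symmetric] using card_image[OF inj] by simp
  also have "\<dots> = (\<Sum>x\<in>X. deg_in E Y x)" using assms by (simp add: deg_in_def)
  finally show ?thesis .
qed

lemma ne_same:
  assumes "finite X" and sym: "\<forall>a b. E a b \<longrightarrow> E b a" and irr: "\<forall>a. \<not> E a a"
  shows "2 * num_edges E X X = (\<Sum>x\<in>X. deg_in E X x)"
proof -
  let ?P = "SIGMA x:X. {y\<in>X. E x y}"
  let ?f = "\<lambda>(x,y). {x,y}"
  have im: "?f ` ?P = {{x, y} | x y. x \<in> X \<and> y \<in> X \<and> E x y}" by auto
  have finP: "finite ?P" using assms(1) by auto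
  have "card ?P = (\<Sum>e\<in>?f ` ?P. card {p\<in>?P. ?f p = e})"
    by (simp only: card_eq_sum, rule sum.image_gen[OF finP])
  also have "\<dots> = (\<Sum>e\<in>?f ` ?P. 2)"
  proof (intro sum.cong refl)
    fix e assume "e \<in> ?f ` ?P"
    then obtain a b where ab: "a \<in> X" "b \<in> X" "E a b" "e = {a,b}" by auto
    have "a \<noteq> b" using ab irr by auto
    have "{p\<in>?P. ?f p = e} = {(a,b),(b,a)}"
      using ab sym by (auto simp: doubleton_eq_iff)
    then show "card {p\<in>?P. ?f p = e} = 2" using \<open>a \<noteq> b\<close> by simp
  qed
  also have "\<dots> = 2 * num_edges E X X" unfolding num_edges_def im by simp
  finally have "card ?P = 2 * num_edges E X X" .
  moreover have "card ?P = (\<Sum>x\<in>X. deg_in E X x)" using assms by (simp add: deg_in_def)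
  ultimately show ?thesis by simp
qed

lemma ne_comm:
  assumes sym: "\<forall>a b. E a b \<longrightarrow> E b a"
  shows "num_edges E X Y = num_edges E Y X"
proof -
  have "{{x, y} | x y. x \<in> X \<and> y \<in> Y \<and> E x y} = {{x, y} | x y. x \<in> Y \<and> y \<in> X \<and> E x y}"
    using sym by (auto simp: insert_commute)
  then show ?thesis unfolding num_edges_def by simp
qed


theorem theorem1:
  fixes V :: "'a set" and E :: "'a \<Rightarrow> 'a \<Rightarrow> bool"
  assumes "simple_graph V E" and "connected_graph V E"
  shows "\<exists>A B C. A \<union> B \<union> C = V \<and> A \<inter> B = {} \<and> A \<inter> C = {} \<and> B \<inter> C = {}
    \<and> (\<forall>v\<in>A. deg_in E B v \<ge> deg_in E A v + max 1 (deg_in E C v))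
    \<and> (\<forall>v\<in>B. deg_in E A v \<ge> deg_in E B v + max 1 (deg_in E C v))
    \<and> (\<forall>v\<in>C. deg_in E C v = 0)
    \<and> (\<forall>v\<in>C. deg_in E A v = deg_in E B v)
    \<and> num_edges E (A \<union> B) C + 2 * num_edges E A A + 2 * num_edges E B B
        \<le> 2 * num_edges E A B"
proof -
  have fin: "finite V" and inV: "\<forall>a b. E a b \<longrightarrow> a \<in> V \<and> b \<in> V"
    and sym: "\<forall>a b. E a b \<longrightarrow> E b a" and irr: "\<forall>a. \<not> E a a"
    using assms(1) unfolding simple_graph_def by auto
  define D where "D = (\<Pi>\<^sub>E v\<in>V. {-1,0,1::int})"
  define Phi where "Phi y = - Qf E V y" for y
  define Z where "Z y = card {v\<in>V. y v = 0}" for y :: "'a \<Rightarrow> int"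
  define P where "P y = (int (card V) + 1) * Phi y + int (Z y)" for y
  have finD: "finite D" unfolding D_def by (rule finite_PiE) (use fin in auto)
  have neD: "D \<noteq> {}" unfolding D_def by (auto simp: PiE_eq_empty_iff)
  obtain x where xD: "x \<in> D" and xmax: "\<forall>y\<in>D. P y \<le> P x"
  proof -
    have "Max (P ` D) \<in> P ` D" using finD neD by auto
    then obtain x where "x \<in> D" "P x = Max (P ` D)" by auto
    moreover have "\<forall>y\<in>D. P y \<le> Max (P ` D)" using finD by auto
    ultimately show ?thesis using that by auto
  qed
  have Zle: "Z y \<le> card V" for y unfolding Z_def by (rule card_mono) (use fin in auto)
  have maxPhi: "Phi y \<le> Phi x" if "y \<in> D" for y
  proof (rule ccontr)
    assume "\<not> Phi y \<le> Phi x"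
    then have "Phi y \<ge> Phi x + 1" by simp
    then have "(int (card V) + 1) * Phi y \<ge> (int (card V) + 1) * (Phi x + 1)"
      by (intro mult_left_mono) auto
    moreover have "P y \<le> P x" using xmax that by auto
    ultimately show False using Zle[of x] unfolding P_def by (simp add: algebra_simps)
  qed
  have maxZ: "Z y \<le> Z x" if "y \<in> D" "Phi y = Phi x" for y
    using xmax that unfolding P_def by auto
  have xval: "x w \<in> {-1,0,1}" if "w \<in> V" for w using xD that unfolding D_def by auto
  have inD: "y \<in> D" if "\<forall>w. w \<notin> V \<longrightarrow> y w = x w" "\<forall>w\<in>V. y w \<in> {-1,0,1}" for y
    using xD that unfolding D_def by (auto simp: PiE_iff extensional_def)
  define s where "s = sv E V x"
  have chg: "Qf E V y = Qf E V x + 2 * (\<Sum>u\<in>S. (y u - x u) * s u) + Qf E S (\<lambda>u. y u - x u)"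
    if "S \<subseteq> V" "\<forall>u\<in>V-S. y u = x u" for y S
    unfolding s_def by (rule change_local[OF fin sym that])
  have QfGe: "Qf E V x \<le> Qf E V y" if "y \<in> D" for y using maxPhi[OF that] unfolding Phi_def by simp
  have F1: "s v = 0" if v: "v \<in> V" "x v = 0" for v
  proof (rule ccontr)
    assume ne: "s v \<noteq> 0"
    define t :: int where "t = (if s v > 0 then -1 else 1)"
    define y where "y = x(v := t)"
    have yD: "y \<in> D" by (rule inD) (use xval v in \<open>auto simp: y_def t_def\<close>)
    have "Qf E V y = Qf E V x + 2 * (\<Sum>u\<in>{v}. (y u - x u) * s u) + Qf E {v} (\<lambda>u. y u - x u)"
      by (rule chg) (use v in \<open>auto simp: y_def\<close>)
    also have "\<dots> = Qf E V x + 2 * t * s v" using v irr by (simp add: Qf_def y_def)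
    finally have "Qf E V y = Qf E V x + 2 * t * s v" .
    moreover have "t * s v < 0" using ne by (auto simp: t_def)
    ultimately show False using QfGe[OF yD] by simp
  qed
  have F3: False if uw: "u \<in> V" "w \<in> V" "x u = 0" "x w = 0" "E u w" for u w
  proof -
    have "u \<noteq> w" using irr uw by auto
    define y where "y = x(u := 1, w := -1)"
    have yD: "y \<in> D" by (rule inD) (use xval uw in \<open>auto simp: y_def\<close>)
    have "Qf E V y = Qf E V x + 2 * (\<Sum>u\<in>{u,w}. (y u - x u) * s u) + Qf E {u,w} (\<lambda>u. y u - x u)"
      by (rule chg) (use uw in \<open>auto simp: y_def\<close>)
    also have "\<dots> = Qf E V x - 2"
      using uw \<open>u \<noteq> w\<close> irr sym F1[of u] F1[of w] by (simp add: Qf_def y_def)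
    finally show False using QfGe[OF yD] by simp
  qed
  have F5: "\<sigma> * s v \<le> -1" if v: "v \<in> V" "x v = \<sigma>" "\<sigma> \<in> {-1,1}" for v \<sigma>
  proof (rule ccontr)
    assume "\<not> \<sigma> * s v \<le> -1"
    define y where "y = x(v := 0)"
    have yD: "y \<in> D" by (rule inD) (use xval v in \<open>auto simp: y_def\<close>)
    have "Qf E V y = Qf E V x + 2 * (\<Sum>u\<in>{v}. (y u - x u) * s u) + Qf E {v} (\<lambda>u. y u - x u)"
      by (rule chg) (use v in \<open>auto simp: y_def\<close>)
    also have "\<dots> = Qf E V x - 2 * \<sigma> * s v" using v irr by (simp add: Qf_def y_def)
    finally have q: "Qf E V y = Qf E V x - 2 * \<sigma> * s v" .
    have "\<sigma> * s v \<le> 0"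
    proof (rule ccontr)
      assume "\<not> \<sigma> * s v \<le> 0"
      then show False using q QfGe[OF yD] by simp
    qed
    then have "\<sigma> * s v = 0" using \<open>\<not> \<sigma> * s v \<le> -1\<close> by linarith
    then have "Phi y = Phi x" using q unfolding Phi_def by (simp add: mult.assoc)
    then have "Z y \<le> Z x" using maxZ yD by simp
    moreover have "{w\<in>V. y w = 0} = insert v {w\<in>V. x w = 0}" using v by (auto simp: y_def)
    moreover have "v \<notin> {w\<in>V. x w = 0}" using v by auto
    ultimately show False unfolding Z_def using fin by simp
  qed
  have F4: "int (card {u\<in>V. x u = 0 \<and> E v u}) \<le> - \<sigma> * s v" if v: "v \<in> V" "x v = \<sigma>" "\<sigma> \<in> {-1,1}" for v \<sigma>
  proof -
    define N where "N = {u\<in>V. x u = 0 \<and> E v u}"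
    have finN: "finite N" unfolding N_def using fin by auto
    have vN: "v \<notin> N" using v unfolding N_def by auto
    have ss: "\<sigma> * \<sigma> = 1" using v by auto
    define y where "y = (\<lambda>w. if w = v then 0 else if w \<in> N then \<sigma> else x w)"
    have yD: "y \<in> D" by (rule inD) (use xval v in \<open>auto simp: y_def N_def\<close>)
    have S: "insert v N \<subseteq> V" using v unfolding N_def by auto
    have "Qf E V y = Qf E V x + 2 * (\<Sum>u\<in>insert v N. (y u - x u) * s u) + Qf E (insert v N) (\<lambda>u. y u - x u)"
      by (rule chg[OF S]) (auto simp: y_def)
    moreover have "(\<Sum>u\<in>insert v N. (y u - x u) * s u) = - \<sigma> * s v"
    proof -
      have "(\<Sum>u\<in>N. (y u - x u) * s u) = 0"
        by (rule sum.neutral) (use F1 in \<open>auto simp: N_def\<close>)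
      then show ?thesis using finN vN v by (simp add: y_def)
    qed
    moreover have "Qf E (insert v N) (\<lambda>u. y u - x u) = - 2 * int (card N)"
    proof -
      let ?d = "\<lambda>u. y u - x u"
      have dv: "?d v = - \<sigma>" using v by (simp add: y_def)
      have dN: "?d u = \<sigma>" if "u \<in> N" for u using that vN by (auto simp: y_def N_def)
      have row_v: "(\<Sum>w\<in>insert v N. if E v w then ?d v * ?d w else 0) = - int (card N)"
      proof -
        have "(\<Sum>w\<in>N. if E v w then ?d v * ?d w else 0) = (\<Sum>w\<in>N. -1)"
          by (rule sum.cong) (use dv dN ss in \<open>auto simp: N_def\<close>)
        then show ?thesis using finN vN irr by simp
      qed
      have row_u: "(\<Sum>w\<in>insert v N. if E u w then ?d u * ?d w else 0) = -1" if u: "u \<in> N" for u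
      proof -
        have "(\<Sum>w\<in>N. if E u w then ?d u * ?d w else 0) = 0"
          by (rule sum.neutral) (use u F3 in \<open>auto simp: N_def\<close>)
        moreover have "E u v" using u sym by (auto simp: N_def)
        moreover have "y v = 0" "x v = \<sigma>" using v by (auto simp: y_def)
        ultimately show ?thesis using finN vN dN[OF u] ss by (simp add: algebra_simps)
      qed
      have "Qf E (insert v N) ?d = (\<Sum>w\<in>insert v N. if E v w then ?d v * ?d w else 0)
          + (\<Sum>u\<in>N. \<Sum>w\<in>insert v N. if E u w then ?d u * ?d w else 0)"
        unfolding Qf_def using finN vN by simp
      also have "\<dots> = - int (card N) + (\<Sum>u\<in>N. -1)" using row_v row_u by simp
      finally show ?thesis by simp
    qed
    ultimately have "Qf E V y = Qf E V x - 2 * \<sigma> * s v - 2 * int (card N)" by simp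
    then show ?thesis using QfGe[OF yD] unfolding N_def by simp
  qed
  define A where "A = {v\<in>V. x v = 1}"
  define B where "B = {v\<in>V. x v = -1}"
  define C where "C = {v\<in>V. x v = 0}"
  have part: "A \<union> B \<union> C = V" using xval unfolding A_def B_def C_def by auto
  have disj: "A \<inter> B = {}" "A \<inter> C = {}" "B \<inter> C = {}" unfolding A_def B_def C_def by auto
  have finABC: "finite A" "finite B" "finite C" using fin unfolding A_def B_def C_def by auto
  have sdeg: "s v = int (deg_in E A v) - int (deg_in E B v)" for v
  proof -
    have "s v = (\<Sum>w\<in>V. (if E v w \<and> x w = 1 then 1 else 0) - (if E v w \<and> x w = -1 then 1 else 0))"
      unfolding s_def sv_def by (rule sum.cong) (use xval in auto)
    also have "\<dots> = (\<Sum>w\<in>V. if E v w \<and> x w = 1 then 1 else 0) - (\<Sum>w\<in>V. if E v w \<and> x w = -1 then 1 else 0)"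
      by (rule sum_subtractf)
    also have "(\<Sum>w\<in>V. if E v w \<and> x w = 1 then 1 else 0) = (\<Sum>w\<in>{w\<in>V. E v w \<and> x w = 1}. 1::int)"
      by (subst sum.inter_filter[OF fin]) simp
    also have "(\<Sum>w\<in>V. if E v w \<and> x w = -1 then 1 else 0) = (\<Sum>w\<in>{w\<in>V. E v w \<and> x w = -1}. 1::int)"
      by (subst sum.inter_filter[OF fin]) simp
    also have "{w\<in>V. E v w \<and> x w = 1} = {u\<in>A. E v u}" unfolding A_def by auto
    also have "{w\<in>V. E v w \<and> x w = -1} = {u\<in>B. E v u}" unfolding B_def by auto
    finally show ?thesis unfolding deg_in_def by simp
  qed
  have cdeg: "deg_in E C v = card {u\<in>V. x u = 0 \<and> E v u}" for v
    unfolding deg_in_def C_def by (rule arg_cong[where f=card]) auto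
  have c1: "deg_in E B v \<ge> deg_in E A v + max 1 (deg_in E C v)" if "v \<in> A" for v
  proof -
    have v: "v \<in> V" "x v = 1" using that unfolding A_def by auto
    have "1 * s v \<le> -1" by (rule F5) (use v in auto)
    moreover have "int (deg_in E C v) \<le> - 1 * s v" unfolding cdeg by (rule F4) (use v in auto)
    ultimately show ?thesis unfolding sdeg by simp
  qed
  have c2: "deg_in E A v \<ge> deg_in E B v + max 1 (deg_in E C v)" if "v \<in> B" for v
  proof -
    have v: "v \<in> V" "x v = -1" using that unfolding B_def by auto
    have "(-1) * s v \<le> -1" by (rule F5) (use v in auto)
    moreover have "int (deg_in E C v) \<le> - (-1) * s v" unfolding cdeg by (rule F4) (use v in auto)
    ultimately show ?thesis unfolding sdeg by simp
  qed
  have c3: "deg_in E C v = 0" if "v \<in> C" for v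
  proof -
    have "{u\<in>C. E v u} = {}" using that F3 unfolding C_def by blast
    then show ?thesis unfolding deg_in_def by (simp only:) simp
  qed
  have c4: "deg_in E A v = deg_in E B v" if "v \<in> C" for v
    using F1[of v] that sdeg[of v] unfolding C_def by simp
  have c5: "num_edges E (A \<union> B) C + 2 * num_edges E A A + 2 * num_edges E B B
        \<le> 2 * num_edges E A B"
  proof -
    have "num_edges E (A \<union> B) C = (\<Sum>v\<in>A \<union> B. deg_in E C v)"
      by (rule ne_disj) (use finABC disj in auto)
    also have "\<dots> = (\<Sum>v\<in>A. deg_in E C v) + (\<Sum>v\<in>B. deg_in E C v)"
      by (rule sum.union_disjoint) (use finABC disj in auto)
    finally have e1: "num_edges E (A \<union> B) C = (\<Sum>v\<in>A. deg_in E C v) + (\<Sum>v\<in>B. deg_in E C v)" .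
    have e2: "2 * num_edges E A A = (\<Sum>v\<in>A. deg_in E A v)" by (rule ne_same) (use finABC sym irr in auto)
    have e3: "2 * num_edges E B B = (\<Sum>v\<in>B. deg_in E B v)" by (rule ne_same) (use finABC sym irr in auto)
    have e4: "num_edges E A B = (\<Sum>v\<in>A. deg_in E B v)" by (rule ne_disj) (use finABC disj in auto)
    have e5: "num_edges E A B = (\<Sum>v\<in>B. deg_in E A v)"
      unfolding ne_comm[OF sym, of A B] by (rule ne_disj) (use finABC disj in auto)
    have i1: "(\<Sum>v\<in>A. deg_in E C v + deg_in E A v) \<le> (\<Sum>v\<in>A. deg_in E B v)"
      by (rule sum_mono) (use c1 in fastforce)
    have i2: "(\<Sum>v\<in>B. deg_in E C v + deg_in E B v) \<le> (\<Sum>v\<in>B. deg_in E A v)"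
      by (rule sum_mono) (use c2 in fastforce)
    show ?thesis using i1 i2 e1 e2 e3 e4 e5 unfolding sum.distrib by linarith
  qed
  show ?thesis
    by (rule exI[of _ A], rule exI[of _ B], rule exI[of _ C]) (use part disj c1 c2 c3 c4 c5 in blast)
qed
end
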